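(* The function $\widetilde J:\mathcal M_s\to[0,\infty]$ defined by $\widetilde J(\varpi,\nu)=H(\nu\,\|\,\nu_1\otimes\mathbb Q)$ if $\varpi_2=\nu_1$ and $\widetilde J(\varpi,\nu)=\infty$ otherwise is convex and lower semicontinuous on $\mathcal M_s$. Moreover $\widetilde J(\varpi,\nu)\le\widehat J(\varpi,\nu)$ for every $(\varpi,\nu)\in\mathcal M_s$, where $$\widehat J(\varpi,\nu)=\sup_{g\in\mathcal C}\Big\{\int g(b,c)\,\nu(db,dc)-\int U_g(b)\,\varpi(da,db)\Big\},\qquad U_g(a)=\log\sum_{c\in\mathcal X^*}e^{g(a,c)}\mathbb Q\{c\mid a\},$$ with $\mathcal C$ the space of bounded functions on $\mathcal X\times\mathcal X^*$.
   Context: $\mathcal X$ is a finite alphabet, $\mathcal X^*=\bigcup_{n\ge0}\{n\}\times\mathcal X^n$ with elements $c=(n,a_1,\dots,a_n)$, $m(a,c)=\sum_i\mathbf 1\{a_i=a\}$, and $\mathbb Q$ is a probability kernel from $\mathcal X$ to $\mathcal X^*$ (offspring kernel of a weakly irreducible, critical multitype Galton–Watson tree with finite second moment). $\mathcal M_s$: pairs $(\varpi,\nu)$, $\varpi$ a finite measure on $\mathcal X\times\mathcal X$, $\nu$ a probability measure on $\mathcal X\times\mathcal X^*$ with $\int n\,d\nu<\infty$, that are sub-consistent: $\varpi(a,b)\ge\sum_c m(b,c)\nu(a,c)$ for all $a,b$; weak topology. $\nu_1$: $\mathcal X$-marginal of $\nu$; $\varpi_2$: second marginal of $\varpi$; $\nu_1\otimes\mathbb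 Q(a,c)=\nu_1(a)\mathbb Q\{c\mid a\}$; $H$ relative entropy. *)

theory Defs
  imports "HOL-Probability.Probability"
begin

text \<open>The space X* = {(n,a_1..a_n)} is rendered as 'a list
  (n = length c, m(b,c) = count_list c b). The kernel Q is 'a => 'a list pmf,
  Q{c|a} = pmf (Q a) c. A finite measure varpi on X x X is a nonnegative function
  'a x 'a => real; a probability measure nu on X x X* is a nonnegative function
  'a x 'a list => real with total mass 1.\<close>

definition Ms :: "(('a::finite \<times> 'a \<Rightarrow> real) \<times> ('a \<times> 'a list \<Rightarrow> real)) set" where
  "Ms = {(w, nu).
      (\<forall>x. 0 \<le> w x) \<and> (\<forall>x. 0 \<le> nu x) \<and> (nu has_sum 1) UNIV \<and>
      ((\<lambda>(a, c). real (length c) * nu (a, c)) summable_on UNIV) \<and>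
      (\<forall>a b. w (a, b) \<ge> (\<Sum>\<^sub>\<infinity>c. real (count_list c b) * nu (a, c)))}"

definition marg1 :: "('a \<times> 'a list \<Rightarrow> real) \<Rightarrow> 'a \<Rightarrow> real" where
  "marg1 nu a = (\<Sum>\<^sub>\<infinity>c. nu (a, c))"

definition marg2 :: "('a::finite \<times> 'a \<Rightarrow> real) \<Rightarrow> 'a \<Rightarrow> real" where
  "marg2 w b = (\<Sum>a\<in>UNIV. w (a, b))"

definition prod_kernel :: "('a \<Rightarrow> real) \<Rightarrow> ('a \<Rightarrow> 'a list pmf) \<Rightarrow> 'a \<times> 'a list \<Rightarrow> real" where
  "prod_kernel mu Q = (\<lambda>(a, c). mu a * pmf (Q a) c)"

definition ext_sum :: "('b \<Rightarrow> real) \<Rightarrow> 'b set \<Rightarrow> ereal" where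
  "ext_sum f A = enn2ereal (\<Sum>\<^sub>\<infinity>x\<in>A. ennreal (max 0 (f x)))
                 - enn2ereal (\<Sum>\<^sub>\<infinity>x\<in>A. ennreal (max 0 (- f x)))"

definition rel_entropy :: "('b \<Rightarrow> real) \<Rightarrow> ('b \<Rightarrow> real) \<Rightarrow> ereal" where
  "rel_entropy nu mu =
     (if \<exists>x. nu x > 0 \<and> mu x = 0 then \<infinity>
      else ext_sum (\<lambda>x. nu x * ln (nu x / mu x)) {x. nu x > 0})"

definition Jtilde :: "('a \<Rightarrow> 'a list pmf) \<Rightarrow> ('a::finite \<times> 'a \<Rightarrow> real) \<times> ('a \<times> 'a list \<Rightarrow> real) \<Rightarrow> ereal" where
  "Jtilde Q p = (case p of (w, nu) \<Rightarrow>
     (if marg2 w = marg1 nu then rel_entropy nu (prod_kernel (marg1 nu) Q) else \<infinity>))"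

definition U :: "('a \<Rightarrow> 'a list pmf) \<Rightarrow> ('a \<times> 'a list \<Rightarrow> real) \<Rightarrow> 'a \<Rightarrow> real" where
  "U Q g a = ln (\<Sum>\<^sub>\<infinity>c. exp (g (a, c)) * pmf (Q a) c)"

definition Jhat :: "('a \<Rightarrow> 'a list pmf) \<Rightarrow> ('a::finite \<times> 'a \<Rightarrow> real) \<times> ('a \<times> 'a list \<Rightarrow> real) \<Rightarrow> ereal" where
  "Jhat Q p = (case p of (w, nu) \<Rightarrow>
     (SUP g\<in>{g :: 'a \<times> 'a list \<Rightarrow> real. bounded (range g)}.
        ereal ((\<Sum>\<^sub>\<infinity>x. g x * nu x) - (\<Sum>x\<in>UNIV. U Q g (snd x) * w x))))"

text \<open>Weak convergence: on the finite space X x X every function is bounded continuous;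
  on X x X* (discrete topology) every bounded function is continuous.\<close>
definition weak_conv_w :: "(nat \<Rightarrow> ('a::finite \<times> 'a \<Rightarrow> real)) \<Rightarrow> ('a \<times> 'a \<Rightarrow> real) \<Rightarrow> bool" where
  "weak_conv_w ws w \<longleftrightarrow> (\<forall>f. (\<lambda>k. \<Sum>x\<in>UNIV. f x * ws k x) \<longlonglongrightarrow> (\<Sum>x\<in>UNIV. f x * w x))"

definition weak_conv_nu :: "(nat \<Rightarrow> ('b \<Rightarrow> real)) \<Rightarrow> ('b \<Rightarrow> real) \<Rightarrow> bool" where
  "weak_conv_nu nus nu \<longleftrightarrow> (\<forall>f :: 'b \<Rightarrow> real. bounded (range f) \<longrightarrow>
      (\<lambda>k. \<Sum>\<^sub>\<infinity>x. f x * nus k x) \<longlonglongrightarrow> (\<Sum>\<^sub>\<infinity>x. f x * nu x))"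

definition Ms_conv where
  "Ms_conv ps p \<longleftrightarrow> weak_conv_w (\<lambda>k. fst (ps k)) (fst p) \<and> weak_conv_nu (\<lambda>k. snd (ps k)) (snd p)"

definition convex_comb where
  "convex_comb t p q = ((\<lambda>x. t * fst p x + (1 - t) * fst q x), (\<lambda>x. t * snd p x + (1 - t) * snd q x))"

end

theory Submission
  imports Defs
begin

lemma pmf_has_sum1: "(pmf p has_sum 1) UNIV"
proof -
  have a: "Infinite_Set_Sum.abs_summable_on (pmf p) UNIV" by (rule pmf_abs_summable)
  have "infsetsum (pmf p) UNIV = 1" using measure_pmf_conv_infsetsum[of p UNIV] by simp
  then have i: "infsum (pmf p) UNIV = 1" using infsetsum_infsum[OF a] by simp
  have "Infinite_Sum.abs_summable_on (pmf p) UNIV" using abs_summable_equivalent a by blast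
  then have "(\<lambda>x. norm (pmf p x)) summable_on UNIV" by simp
  then have "pmf p summable_on UNIV" by simp
  then show ?thesis using i has_sum_infsum by metis
qed

lemma pmf_summable1: "pmf p summable_on UNIV"
  using pmf_has_sum1 has_sum_imp_summable by blast

lemma pair_has_sum:
  fixes f :: "'a::finite \<times> 'b \<Rightarrow> 'c::topological_comm_monoid_add"
  assumes "\<And>a. ((\<lambda>c. f (a,c)) has_sum s a) UNIV"
  shows "(f has_sum (\<Sum>a\<in>UNIV. s a)) UNIV"
proof -
  have "(f has_sum (\<Sum>a\<in>UNIV. s a)) (\<Union>a\<in>UNIV. range (Pair a))"
  proof (rule sum_has_sum)
    fix a
    have "((f \<circ> Pair a) has_sum s a) UNIV" using assms[of a] by (simp add: o_def)
    then show "(f has_sum s a) (range (Pair a))"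
      by (subst has_sum_reindex) (auto simp: inj_on_def)
  qed auto
  moreover have "(\<Union>a\<in>UNIV. range (Pair a)) = (UNIV :: ('a \<times> 'b) set)" by auto
  ultimately show ?thesis by simp
qed

lemma slice_summable:
  fixes f :: "'a \<times> 'b \<Rightarrow> real"
  assumes "f summable_on UNIV"
  shows "(\<lambda>c. f (a,c)) summable_on UNIV"
proof -
  have "f summable_on range (Pair a)" using assms summable_on_subset_banach by blast
  then have "(f \<circ> Pair a) summable_on UNIV" by (subst (asm) summable_on_reindex) (auto simp: inj_on_def)
  then show ?thesis by (simp add: o_def)
qed

lemma pair_infsum:
  fixes f :: "'a::finite \<times> 'b \<Rightarrow> real"
  assumes "f summable_on UNIV"
  shows "infsum f UNIV = (\<Sum>a\<in>UNIV. \<Sum>\<^sub>\<infinity>c. f (a,c))"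
proof -
  have "(f has_sum (\<Sum>a\<in>UNIV. \<Sum>\<^sub>\<infinity>c. f (a,c))) UNIV"
    by (rule pair_has_sum) (use slice_summable[OF assms] in auto)
  then show ?thesis by (rule infsumI)
qed

lemma bdd_mult_summable:
  fixes g :: "'b \<Rightarrow> real"
  assumes "bounded (range g)" "nu summable_on UNIV" "\<And>x. 0 \<le> nu x"
  shows "(\<lambda>x. g x * nu x) summable_on UNIV"
proof -
  obtain B where B: "\<And>x. \<bar>g x\<bar> \<le> B" using assms(1) unfolding bounded_real by auto
  have "(\<lambda>x. B * nu x) summable_on UNIV" using assms(2) summable_on_cmult_right by blast
  moreover have "norm (g x * nu x) \<le> B * nu x" for x
    using B[of x] assms(3)[of x] by (simp add: abs_mult mult_right_mono)
  ultimately have "(\<lambda>x. norm (g x * nu x)) summable_on UNIV"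
    by (rule summable_on_comparison_test) auto
  then show ?thesis by (rule abs_summable_summable)
qed

lemma K0:
  fixes f :: "'b \<Rightarrow> real"
  assumes "f summable_on A" "\<And>x. x \<in> A \<Longrightarrow> 0 \<le> f x"
  shows "(\<Sum>\<^sub>\<infinity>x\<in>A. ennreal (f x)) = ennreal (infsum f A)"
proof -
  have "(\<Sum>\<^sub>\<infinity>x\<in>A. ennreal (f x)) = (SUP F\<in>{F. finite F \<and> F \<subseteq> A}. sum (\<lambda>x. ennreal (f x)) F)"
    by (rule nonneg_infsum_complete) auto
  also have "\<dots> = (SUP F\<in>{F. finite F \<and> F \<subseteq> A}. ennreal (sum f F))"
    by (intro SUP_cong refl sum_ennreal) (use assms(2) in auto)
  also have "\<dots> = ennreal (infsum f A)"
    using infsum_nonneg_is_SUPREMUM_ennreal[OF assms] by simp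
  finally show ?thesis .
qed


lemma has_sum_diff_r:
  fixes f g :: "'b \<Rightarrow> real"
  assumes "(f has_sum a) A" "(g has_sum b) A"
  shows "((\<lambda>x. f x - g x) has_sum (a - b)) A"
  using has_sum_add[OF assms(1) has_sum_uminusI[OF assms(2)]] by simp

lemma infsum_diff_r:
  fixes f g :: "'b \<Rightarrow> real"
  assumes "f summable_on A" "g summable_on A"
  shows "infsum (\<lambda>x. f x - g x) A = infsum f A - infsum g A"
  using has_sum_diff_r[OF has_sum_infsum[OF assms(1)] has_sum_infsum[OF assms(2)]] infsumI by blast

lemma summable_diff_r:
  fixes f g :: "'b \<Rightarrow> real"
  assumes "f summable_on A" "g summable_on A"
  shows "(\<lambda>x. f x - g x) summable_on A"
  using has_sum_diff_r[OF has_sum_infsum[OF assms(1)] has_sum_infsum[OF assms(2)]] has_sum_imp_summable by blast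

lemma ennsum_mono:
  fixes f g :: "'b \<Rightarrow> ennreal"
  assumes "\<And>x. x \<in> A \<Longrightarrow> f x \<le> g x"
  shows "infsum f A \<le> infsum g A"
proof -
  have "infsum f A = (SUP F\<in>{F. finite F \<and> F \<subseteq> A}. sum f F)" by (rule nonneg_infsum_complete) auto
  also have "\<dots> \<le> (SUP F\<in>{F. finite F \<and> F \<subseteq> A}. sum g F)"
    by (rule SUP_mono) (use assms in \<open>auto intro!: sum_mono\<close>)
  also have "\<dots> = infsum g A" by (rule nonneg_infsum_complete[symmetric]) auto
  finally show ?thesis .
qed

lemma ennsum_ge_sum:
  fixes f :: "'b \<Rightarrow> ennreal"
  assumes "finite G" "G \<subseteq> A"
  shows "sum f G \<le> infsum f A"
proof -
  have "sum f G \<le> (SUP F\<in>{F. finite F \<and> F \<subseteq> A}. sum f F)" by (rule SUP_upper) (use assms in auto)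
  also have "\<dots> = infsum f A" by (rule nonneg_infsum_complete[symmetric]) auto
  finally show ?thesis .
qed

lemma G1:
  fixes f phi :: "'b \<Rightarrow> real"
  assumes fs: "f summable_on A" and le: "\<And>x. x \<in> A \<Longrightarrow> f x \<le> phi x"
  shows "ereal (infsum f A) \<le> ext_sum phi A"
proof -
  define fp where "fp x = max 0 (f x)" for x
  define fn where "fn x = max 0 (- f x)" for x
  have abs: "(\<lambda>x. norm (f x)) summable_on A"
    using summable_on_iff_abs_summable_on_real fs by blast
  have fps: "fp summable_on A"
    by (rule summable_on_comparison_test[OF abs]) (auto simp: fp_def)
  have fns: "fn summable_on A"
    by (rule summable_on_comparison_test[OF abs]) (auto simp: fn_def)
  have "infsum f A = infsum (\<lambda>x. fp x - fn x) A"
    by (rule infsum_cong) (auto simp: fp_def fn_def)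
  also have "\<dots> = infsum fp A - infsum fn A" by (rule infsum_diff_r[OF fps fns])
  finally have eq: "infsum f A = infsum fp A - infsum fn A" .
  have p0: "0 \<le> infsum fp A" by (rule infsum_nonneg) (auto simp: fp_def)
  have n0: "0 \<le> infsum fn A" by (rule infsum_nonneg) (auto simp: fn_def)
  have P: "ennreal (infsum fp A) \<le> (\<Sum>\<^sub>\<infinity>x\<in>A. ennreal (max 0 (phi x)))"
  proof -
    have "ennreal (infsum fp A) = (\<Sum>\<^sub>\<infinity>x\<in>A. ennreal (fp x))"
      using K0[OF fps] by (simp add: fp_def)
    also have "\<dots> \<le> (\<Sum>\<^sub>\<infinity>x\<in>A. ennreal (max 0 (phi x)))"
      by (rule ennsum_mono) (auto simp: fp_def intro!: ennreal_leI dest: le)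
    finally show ?thesis .
  qed
  have N: "(\<Sum>\<^sub>\<infinity>x\<in>A. ennreal (max 0 (- phi x))) \<le> ennreal (infsum fn A)"
  proof -
    have "(\<Sum>\<^sub>\<infinity>x\<in>A. ennreal (max 0 (- phi x))) \<le> (\<Sum>\<^sub>\<infinity>x\<in>A. ennreal (fn x))"
      by (rule ennsum_mono) (auto simp: fn_def intro!: ennreal_leI dest: le)
    also have "\<dots> = ennreal (infsum fn A)"
      using K0[OF fns] by (simp add: fn_def)
    finally show ?thesis .
  qed
  have "ereal (infsum f A) = enn2ereal (ennreal (infsum fp A)) - enn2ereal (ennreal (infsum fn A))"
    using eq p0 n0 by simp
  also have "\<dots> \<le> ext_sum phi A"
    unfolding ext_sum_def
    by (rule ereal_minus_mono) (use P N in \<open>simp_all add: less_eq_ennreal.rep_eq[symmetric]\<close>)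
  finally show ?thesis .
qed

lemma G2:
  fixes phi :: "'b \<Rightarrow> real"
  assumes Nb: "(\<Sum>\<^sub>\<infinity>x\<in>A. ennreal (max 0 (- phi x))) \<le> ennreal n"
    and M: "ereal M < ext_sum phi A"
  shows "\<exists>F. finite F \<and> F \<subseteq> A \<and> (\<forall>G. finite G \<and> F \<subseteq> G \<and> G \<subseteq> A \<longrightarrow> M < sum phi G)"
proof -
  define P where "P = (\<Sum>\<^sub>\<infinity>x\<in>A. ennreal (max 0 (phi x)))"
  define N where "N = (\<Sum>\<^sub>\<infinity>x\<in>A. ennreal (max 0 (- phi x)))"
  have Nfin: "N < \<infinity>" using Nb unfolding N_def by (simp add: le_less_trans)
  define n' where "n' = enn2real N"
  have n'0: "0 \<le> n'" by (simp add: n'_def)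
  have Nn': "N = ennreal n'" using Nfin by (simp add: n'_def)
  have Psup: "P = (SUP F\<in>{F. finite F \<and> F \<subseteq> A}. ennreal (sum (\<lambda>x. max 0 (phi x)) F))"
  proof -
    have "P = (SUP F\<in>{F. finite F \<and> F \<subseteq> A}. sum (\<lambda>x. ennreal (max 0 (phi x))) F)"
      unfolding P_def by (rule nonneg_infsum_complete) auto
    also have "\<dots> = (SUP F\<in>{F. finite F \<and> F \<subseteq> A}. ennreal (sum (\<lambda>x. max 0 (phi x)) F))"
      by (intro SUP_cong refl sum_ennreal) auto
    finally show ?thesis .
  qed
  have MP: "ereal (M + n') < enn2ereal P"
  proof -
    have "ereal M < enn2ereal P - ereal n'" using M Nn' n'0 unfolding ext_sum_def P_def N_def by simp
    then show ?thesis by (cases "enn2ereal P") (auto simp: algebra_simps)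
  qed
  have "\<exists>F. finite F \<and> F \<subseteq> A \<and> M + n' < sum (\<lambda>x. max 0 (phi x)) F"
  proof (cases "M + n' < 0")
    case True
    then show ?thesis by (intro exI[of _ "{}"]) auto
  next
    case False
    then have "ennreal (M + n') < P"
      using MP by (simp add: less_ennreal.rep_eq)
    then obtain F where F: "F \<in> {F. finite F \<and> F \<subseteq> A}" "ennreal (M + n') < ennreal (sum (\<lambda>x. max 0 (phi x)) F)"
      unfolding Psup less_SUP_iff by blast
    then show ?thesis using False by (intro exI[of _ F]) (auto simp: ennreal_less_iff)
  qed
  then obtain F where F: "finite F" "F \<subseteq> A" "M + n' < sum (\<lambda>x. max 0 (phi x)) F" by blast
  show ?thesis
  proof (intro exI[of _ F] conjI allI impI F(1,2))
    fix G assume G: "finite G \<and> F \<subseteq> G \<and> G \<subseteq> A"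
    have "sum (\<lambda>x. max 0 (phi x)) F \<le> sum (\<lambda>x. max 0 (phi x)) G"
      by (rule sum_mono2) (use G in auto)
    moreover have "sum (\<lambda>x. max 0 (- phi x)) G \<le> n'"
    proof -
      have "ennreal (sum (\<lambda>x. max 0 (- phi x)) G) = sum (\<lambda>x. ennreal (max 0 (- phi x))) G"
        by (rule sum_ennreal[symmetric]) auto
      also have "\<dots> \<le> N"
        unfolding N_def using G by (intro ennsum_ge_sum) auto
      finally show ?thesis using Nn' n'0 by (simp add: ennreal_le_iff)
    qed
    moreover have "sum phi G = sum (\<lambda>x. max 0 (phi x)) G - sum (\<lambda>x. max 0 (- phi x)) G"
      by (simp add: sum_subtractf[symmetric]) (intro sum.cong refl, auto)
    ultimately show "M < sum phi G" using F(3) by linarith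
  qed
qed


definition Fg :: "('a \<Rightarrow> 'a list pmf) \<Rightarrow> ('a \<times> 'a list \<Rightarrow> real) \<Rightarrow> ('a::finite \<times> 'a \<Rightarrow> real) \<times> ('a \<times> 'a list \<Rightarrow> real) \<Rightarrow> real" where
  "Fg Q g p = (\<Sum>\<^sub>\<infinity>x. g x * snd p x) - (\<Sum>x\<in>UNIV. U Q g (snd x) * fst p x)"

lemma Jhat_Fg: "Jhat Q p = (SUP g\<in>{g. bounded (range g)}. ereal (Fg Q g p))"
  by (cases p) (simp add: Jhat_def Fg_def)

definition Z :: "('a \<Rightarrow> 'a list pmf) \<Rightarrow> ('a \<times> 'a list \<Rightarrow> real) \<Rightarrow> 'a \<Rightarrow> real" where
  "Z Q g a = (\<Sum>\<^sub>\<infinity>c. exp (g (a, c)) * pmf (Q a) c)"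

lemma U_Z: "U Q g a = ln (Z Q g a)" by (simp add: U_def Z_def)

lemma Z_props:
  assumes "bounded (range g)"
  shows "(\<lambda>c. exp (g (a, c)) * pmf (Q a) c) summable_on UNIV" "0 < Z Q g a"
proof -
  obtain B where B: "\<And>x. \<bar>g x\<bar> \<le> B" using assms unfolding bounded_real by auto
  have s1: "(\<lambda>c. exp B * pmf (Q a) c) summable_on UNIV"
    using pmf_summable1 summable_on_cmult_right by blast
  show s: "(\<lambda>c. exp (g (a, c)) * pmf (Q a) c) summable_on UNIV"
    by (rule summable_on_comparison_test[OF s1]) (use B in \<open>auto intro!: mult_right_mono simp: abs_le_iff\<close>)
  have h1: "((\<lambda>c. exp (- B) * pmf (Q a) c) has_sum exp (- B) * 1) UNIV"
    by (rule has_sum_cmult_right[OF pmf_has_sum1])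
  have "(\<Sum>\<^sub>\<infinity>c. exp (- B) * pmf (Q a) c) \<le> (\<Sum>\<^sub>\<infinity>c. exp (g (a, c)) * pmf (Q a) c)"
    by (rule infsum_mono[OF has_sum_imp_summable[OF h1] s])
       (use B in \<open>auto intro!: mult_right_mono simp: abs_le_iff, smt (verit) B\<close>)
  then have "exp (- B) \<le> Z Q g a"
    unfolding Z_def using infsumI[OF h1] by simp
  then show "0 < Z Q g a" using exp_gt_zero[of "-B"] by linarith
qed

lemma Z_const: "Z Q (\<lambda>x. k (fst x)) a = exp (k a)"
  unfolding Z_def using has_sum_cmult_right[OF pmf_has_sum1, of "exp (k a)" "Q a"] infsumI by fastforce

lemma U_const: "U Q (\<lambda>x. k (fst x)) a = k a"
  by (simp add: U_Z Z_const)

locale nuloc =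
  fixes nu :: "'a::finite \<times> 'a list \<Rightarrow> real"
  assumes nu0: "\<And>x. 0 \<le> nu x" and nu1: "(nu has_sum 1) UNIV"
begin

lemma nus: "nu summable_on UNIV" using nu1 has_sum_imp_summable by blast

lemma slice_has: "((\<lambda>c. nu (a, c)) has_sum marg1 nu a) UNIV"
  unfolding marg1_def using slice_summable[OF nus] has_sum_infsum by blast

lemma sum_marg1: "(\<Sum>a\<in>UNIV. marg1 nu a) = 1"
  using pair_infsum[OF nus] infsumI[OF nu1] by (simp add: marg1_def)

lemma marg1_nonneg: "0 \<le> marg1 nu a"
  unfolding marg1_def by (rule infsum_nonneg) (simp add: nu0)

lemma nu_le_marg1: "nu (a, c) \<le> marg1 nu a"
proof -
  have "sum (\<lambda>c. nu (a, c)) {c} \<le> (\<Sum>\<^sub>\<infinity>c. nu (a, c))"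
    by (rule finite_sum_le_infsum) (use slice_summable[OF nus] nu0 in auto)
  then show ?thesis by (simp add: marg1_def)
qed

lemma U_nu: "(\<Sum>\<^sub>\<infinity>x. h (fst x) * nu x) = (\<Sum>a\<in>UNIV. h a * marg1 nu a)"
proof -
  have "((\<lambda>x. h (fst x) * nu x) has_sum (\<Sum>a\<in>UNIV. h a * marg1 nu a)) UNIV"
    by (rule pair_has_sum) (simp add: has_sum_cmult_right[OF slice_has])
  then show ?thesis by (rule infsumI)
qed

lemma hfst_summable: "(\<lambda>x. h (fst x) * nu x) summable_on UNIV"
proof -
  have "((\<lambda>x. h (fst x) * nu x) has_sum (\<Sum>a\<in>UNIV. h a * marg1 nu a)) UNIV"
    by (rule pair_has_sum) (simp add: has_sum_cmult_right[OF slice_has])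
  then show ?thesis by (rule has_sum_imp_summable)
qed

lemma mu_has_sum:
  assumes "\<And>a. ((\<lambda>c. k (a, c) * pmf (Q a) c) has_sum s a) UNIV"
  shows "((\<lambda>x. prod_kernel (marg1 nu) Q x * k x) has_sum (\<Sum>a\<in>UNIV. marg1 nu a * s a)) UNIV"
proof (rule pair_has_sum)
  fix a
  have "((\<lambda>c. marg1 nu a * (k (a, c) * pmf (Q a) c)) has_sum marg1 nu a * s a) UNIV"
    by (rule has_sum_cmult_right[OF assms])
  then show "((\<lambda>c. prod_kernel (marg1 nu) Q (a, c) * k (a, c)) has_sum marg1 nu a * s a) UNIV"
    by (simp add: prod_kernel_def algebra_simps)
qed

lemma mu_nonneg: "0 \<le> prod_kernel (marg1 nu) Q x"
  by (cases x) (simp add: prod_kernel_def marg1_nonneg)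

end

lemma U_w: "(\<Sum>x\<in>UNIV. h (snd x) * w x) = (\<Sum>b\<in>UNIV. h b * marg2 w (b::'a::finite))"
proof -
  have "(\<Sum>x\<in>UNIV. h (snd x) * w x) = (\<Sum>x\<in>UNIV \<times> UNIV. h (snd x) * w x)" by simp
  also have "\<dots> = (\<Sum>a\<in>UNIV. \<Sum>b\<in>UNIV. h b * w (a, b))"
    by (subst sum.cartesian_product) (simp add: case_prod_beta)
  also have "\<dots> = (\<Sum>b\<in>UNIV. \<Sum>a\<in>UNIV. h b * w (a, b))" by (rule sum.swap)
  also have "\<dots> = (\<Sum>b\<in>UNIV. h b * marg2 w b)"
    by (simp add: marg2_def sum_distrib_left)
  finally show ?thesis .
qed

lemma gibbs_pt:
  fixes a b hh :: real
  assumes "0 < a" "0 < b"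
  shows "hh * a - (b * exp hh - a) \<le> a * ln (a / b)"
proof -
  have "ln (b * exp hh / a) \<le> b * exp hh / a - 1" by (rule ln_le_minus_one) (use assms in simp)
  moreover have "ln (b * exp hh / a) = ln b + hh - ln a" using assms by (simp add: ln_div ln_mult)
  ultimately have "a * (ln b + hh - ln a) \<le> a * (b * exp hh / a - 1)"
    using assms(1) by (intro mult_left_mono) auto
  then have "a * ln b + a * hh - a * ln a \<le> b * exp hh - a" using assms by (simp add: algebra_simps)
  moreover have "a * ln (a / b) = a * ln a - a * ln b" using assms by (simp add: ln_div algebra_simps)
  ultimately show ?thesis by (simp add: algebra_simps)
qed


context nuloc begin

lemma gnu_summable: "bounded (range g) \<Longrightarrow> (\<lambda>x. g x * nu x) summable_on UNIV"
  by (rule bdd_mult_summable) (use nus nu0 in auto)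

lemma L1:
  assumes g: "bounded (range g)" and mm: "marg2 w = marg1 nu"
  shows "ereal (Fg Q g (w, nu)) \<le> rel_entropy nu (prod_kernel (marg1 nu) Q)"
proof (cases "\<exists>x. nu x > 0 \<and> prod_kernel (marg1 nu) Q x = 0")
  case True
  then show ?thesis by (simp add: rel_entropy_def)
next
  case False
  define m where "m = marg1 nu"
  define mu where "mu = prod_kernel m Q"
  define S where "S = {x. nu x > 0}"
  define h where "h x = g x - U Q g (fst x)" for x
  define phi where "phi x = nu x * ln (nu x / mu x)" for x
  have mupos: "x \<in> S \<Longrightarrow> 0 < mu x" for x
    using False mu_nonneg[of Q x] unfolding S_def mu_def m_def by (metis mem_Collect_eq order_le_less)
  have RE: "rel_entropy nu (prod_kernel (marg1 nu) Q) = ext_sum phi S"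
    using False unfolding rel_entropy_def phi_def S_def mu_def m_def by (simp only: if_False)
  have s1: "(\<lambda>x. g x * nu x) summable_on UNIV" by (rule gnu_summable[OF g])
  have s2: "(\<lambda>x. U Q g (fst x) * nu x) summable_on UNIV" by (rule hfst_summable)
  have hs: "(\<lambda>x. h x * nu x) summable_on UNIV"
    using summable_diff_r[OF s1 s2] by (simp add: h_def algebra_simps)
  have "Fg Q g (w, nu) = (\<Sum>\<^sub>\<infinity>x. g x * nu x) - (\<Sum>\<^sub>\<infinity>x. U Q g (fst x) * nu x)"
    unfolding Fg_def by (simp add: U_w U_nu mm)
  also have "\<dots> = (\<Sum>\<^sub>\<infinity>x. h x * nu x)"
    unfolding infsum_diff_r[OF s1 s2, symmetric] by (simp add: h_def algebra_simps)
  also have "\<dots> = (\<Sum>\<^sub>\<infinity>x\<in>S. h x * nu x)"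
    by (rule infsum_cong_neutral) (use nu0 in \<open>auto simp: S_def intro: antisym\<close>)
  finally have F1: "Fg Q g (w, nu) = (\<Sum>\<^sub>\<infinity>x\<in>S. h x * nu x)" .
  have mue: "((\<lambda>x. mu x * exp (h x)) has_sum 1) UNIV"
  proof -
    have "((\<lambda>x. prod_kernel (marg1 nu) Q x * exp (h x)) has_sum (\<Sum>a\<in>UNIV. marg1 nu a * 1)) UNIV"
    proof (rule mu_has_sum)
      fix a
      have z: "0 < Z Q g a" by (rule Z_props(2)[OF g])
      have "((\<lambda>c. exp (- U Q g a) * (exp (g (a, c)) * pmf (Q a) c)) has_sum exp (- U Q g a) * Z Q g a) UNIV"
        unfolding Z_def by (rule has_sum_cmult_right[OF has_sum_infsum[OF Z_props(1)[OF g]]])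
      moreover have "exp (- U Q g a) * Z Q g a = 1" using z by (simp add: U_Z exp_minus field_simps)
      ultimately show "((\<lambda>c. exp (h (a, c)) * pmf (Q a) c) has_sum 1) UNIV"
        using z by (simp add: h_def exp_diff exp_minus field_simps)
    qed
    then show ?thesis using sum_marg1 by (simp add: mu_def m_def)
  qed
  define psi where "psi x = mu x * exp (h x) - nu x" for x
  have psis: "psi summable_on UNIV"
    unfolding psi_def by (rule summable_diff_r[OF has_sum_imp_summable[OF mue] nus])
  define f where "f x = h x * nu x - psi x" for x
  have fs: "f summable_on S"
    unfolding f_def by (rule summable_diff_r; rule summable_on_subset_banach[OF _ subset_UNIV]) (use hs psis in auto)
  have nuS: "(\<Sum>\<^sub>\<infinity>x\<in>S. nu x) = 1"
  proof -
    have "(\<Sum>\<^sub>\<infinity>x\<in>S. nu x) = (\<Sum>\<^sub>\<infinity>x. nu x)"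
      by (rule infsum_cong_neutral) (use nu0 in \<open>auto simp: S_def intro: antisym\<close>)
    then show ?thesis using infsumI[OF nu1] by simp
  qed
  have mueS: "(\<Sum>\<^sub>\<infinity>x\<in>S. mu x * exp (h x)) \<le> 1"
  proof -
    have "(\<Sum>\<^sub>\<infinity>x\<in>S. mu x * exp (h x)) \<le> (\<Sum>\<^sub>\<infinity>x. mu x * exp (h x))"
      by (rule infsum_mono_neutral)
         (use has_sum_imp_summable[OF mue] mu_nonneg in \<open>auto intro: summable_on_subset_banach simp: mu_def m_def\<close>)
    then show ?thesis using infsumI[OF mue] by simp
  qed
  have psiS: "(\<Sum>\<^sub>\<infinity>x\<in>S. psi x) \<le> 0"
  proof -
    have "(\<Sum>\<^sub>\<infinity>x\<in>S. psi x) = (\<Sum>\<^sub>\<infinity>x\<in>S. mu x * exp (h x)) - (\<Sum>\<^sub>\<infinity>x\<in>S. nu x)"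
      unfolding psi_def
      by (rule infsum_diff_r; rule summable_on_subset_banach[OF _ subset_UNIV])
         (use has_sum_imp_summable[OF mue] nus in auto)
    then show ?thesis using nuS mueS by simp
  qed
  have "(\<Sum>\<^sub>\<infinity>x\<in>S. f x) = (\<Sum>\<^sub>\<infinity>x\<in>S. h x * nu x) - (\<Sum>\<^sub>\<infinity>x\<in>S. psi x)"
    unfolding f_def by (rule infsum_diff_r; rule summable_on_subset_banach[OF _ subset_UNIV]) (use hs psis in auto)
  then have "Fg Q g (w, nu) \<le> (\<Sum>\<^sub>\<infinity>x\<in>S. f x)" using F1 psiS by simp
  then have "ereal (Fg Q g (w, nu)) \<le> ereal (\<Sum>\<^sub>\<infinity>x\<in>S. f x)" by simp
  also have "\<dots> \<le> ext_sum phi S"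
  proof (rule G1[OF fs])
    fix x assume x: "x \<in> S"
    show "f x \<le> phi x"
      unfolding f_def psi_def phi_def using gibbs_pt[of "nu x" "mu x" "h x"] x mupos[OF x]
      by (simp add: S_def)
  qed
  finally show ?thesis using RE by simp
qed

end


lemma ereal_le_by_reals:
  fixes x y :: ereal
  assumes "\<And>M. ereal M < x \<Longrightarrow> ereal M \<le> y"
  shows "x \<le> y"
proof (rule ccontr)
  assume "\<not> x \<le> y"
  then have "y < x" by simp
  then obtain z where "y < ereal z" "ereal z < x" using ereal_dense2 by blast
  then show False using assms[of z] by simp
qed

lemma bounded_range_finite:
  assumes "finite (range (g :: 'b \<Rightarrow> real))"
  shows "bounded (range g)"
  using assms finite_imp_bounded by blast

context nuloc begin

lemma Fg_const: "Fg Q (\<lambda>x. k (fst x)) (w, nu) = (\<Sum>a\<in>UNIV. k a * (marg1 nu a - marg2 w a))"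
proof -
  have "Fg Q (\<lambda>x. k (fst x)) (w, nu) = (\<Sum>a\<in>UNIV. k a * marg1 nu a) - (\<Sum>b\<in>UNIV. k b * marg2 w b)"
    unfolding Fg_def by (simp only: U_w U_nu U_const fst_conv snd_conv)
  then show ?thesis by (simp add: sum_subtractf[symmetric] algebra_simps)
qed

lemma Jhat_mismatch:
  assumes "marg2 w \<noteq> marg1 nu"
  shows "Jhat Q (w, nu) = \<infinity>"
proof (rule ereal_top)
  fix N
  obtain b0 where b0: "marg2 w b0 \<noteq> marg1 nu b0" using assms by blast
  define d where "d = marg1 nu b0 - marg2 w b0"
  have d: "d \<noteq> 0" using b0 by (simp add: d_def)
  define k where "k a = (if a = b0 then N / d else 0)" for a
  have b: "bounded (range (\<lambda>x. k (fst x)))"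
    by (rule bounded_range_finite, rule finite_subset[of _ "{0, N / d}"]) (auto simp: k_def)
  have "Fg Q (\<lambda>x. k (fst x)) (w, nu) = N"
  proof -
    have "(\<Sum>a\<in>UNIV. k a * (marg1 nu a - marg2 w a)) = (\<Sum>a\<in>UNIV. if a = b0 then N / d * d else 0)"
      by (rule sum.cong) (auto simp: k_def d_def)
    then show ?thesis unfolding Fg_const using d by simp
  qed
  then have "ereal N = ereal (Fg Q (\<lambda>x. k (fst x)) (w, nu))" by simp
  also have "\<dots> \<le> Jhat Q (w, nu)"
    unfolding Jhat_Fg by (rule SUP_upper) (use b in simp)
  finally show "ereal N \<le> Jhat Q (w, nu)" .
qed

lemma Jhat_nac:
  assumes "\<exists>x. nu x > 0 \<and> prod_kernel (marg1 nu) Q x = 0"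
  shows "Jhat Q (w, nu) = \<infinity>"
proof (rule ereal_top)
  fix N
  obtain a0 c0 where x0: "nu (a0, c0) > 0" "prod_kernel (marg1 nu) Q (a0, c0) = 0" using assms by auto
  have "marg1 nu a0 > 0" using x0(1) nu_le_marg1[of a0 c0] by simp
  then have p0: "pmf (Q a0) c0 = 0" using x0(2) by (simp add: prod_kernel_def)
  define g where "g x = (if x = (a0, c0) then N / nu (a0, c0) else 0)" for x
  have b: "bounded (range g)"
    by (rule bounded_range_finite, rule finite_subset[of _ "{0, N / nu (a0, c0)}"]) (auto simp: g_def)
  have Z1: "Z Q g a = 1" for a
  proof -
    have "Z Q g a = (\<Sum>\<^sub>\<infinity>c. pmf (Q a) c)"
      unfolding Z_def by (rule infsum_cong) (auto simp: g_def p0)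
    then show ?thesis using infsumI[OF pmf_has_sum1] by simp
  qed
  have "(\<Sum>\<^sub>\<infinity>x. g x * nu x) = (\<Sum>\<^sub>\<infinity>x\<in>{(a0, c0)}. g x * nu x)"
    by (rule infsum_cong_neutral) (auto simp: g_def)
  also have "\<dots> = N" using x0(1) by (simp add: g_def)
  finally have "Fg Q g (w, nu) = N" unfolding Fg_def by (simp add: U_Z Z1)
  then have "ereal N = ereal (Fg Q g (w, nu))" by simp
  also have "\<dots> \<le> Jhat Q (w, nu)"
    unfolding Jhat_Fg by (rule SUP_upper) (use b in simp)
  finally show "ereal N \<le> Jhat Q (w, nu)" .
qed

end


lemma ennsum_subset:
  fixes f :: "'b \<Rightarrow> ennreal"
  assumes "A \<subseteq> B"
  shows "infsum f A \<le> infsum f B"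
proof -
  have "infsum f A = (SUP F\<in>{F. finite F \<and> F \<subseteq> A}. sum f F)" by (rule nonneg_infsum_complete) auto
  also have "\<dots> \<le> (SUP F\<in>{F. finite F \<and> F \<subseteq> B}. sum f F)"
    by (rule SUP_subset_mono) (use assms in auto)
  also have "\<dots> = infsum f B" by (rule nonneg_infsum_complete[symmetric]) auto
  finally show ?thesis .
qed

context nuloc begin

lemma L2_ac:
  assumes mm: "marg2 w = marg1 nu"
    and ac: "\<not> (\<exists>x. nu x > 0 \<and> prod_kernel (marg1 nu) Q x = 0)"
  shows "rel_entropy nu (prod_kernel (marg1 nu) Q) \<le> Jhat Q (w, nu)"
proof -
  define m where "m = marg1 nu"
  define mu where "mu = prod_kernel m Q"
  define S where "S = {x. nu x > 0}"
  define phi where "phi x = nu x * ln (nu x / mu x)" for x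
  have mupos: "x \<in> S \<Longrightarrow> 0 < mu x" for x
    using ac mu_nonneg[of Q x] unfolding S_def mu_def m_def by (metis mem_Collect_eq order_le_less)
  have RE: "rel_entropy nu (prod_kernel (marg1 nu) Q) = ext_sum phi S"
    using ac unfolding rel_entropy_def phi_def S_def mu_def m_def by (simp only: if_False)
  have muh: "(mu has_sum 1) UNIV"
  proof -
    have "((\<lambda>x. prod_kernel (marg1 nu) Q x * 1) has_sum (\<Sum>a\<in>UNIV. marg1 nu a * 1)) UNIV"
      by (rule mu_has_sum) (simp add: pmf_has_sum1)
    then show ?thesis using sum_marg1 by (simp add: mu_def m_def)
  qed
  have Nb: "(\<Sum>\<^sub>\<infinity>x\<in>S. ennreal (max 0 (- phi x))) \<le> ennreal 1"
  proof -
    have "(\<Sum>\<^sub>\<infinity>x\<in>S. ennreal (max 0 (- phi x))) \<le> (\<Sum>\<^sub>\<infinity>x\<in>S. ennreal (mu x))"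
    proof (rule ennsum_mono)
      fix x assume x: "x \<in> S"
      have "0 - (mu x * exp 0 - nu x) \<le> nu x * ln (nu x / mu x)"
        using gibbs_pt[of "nu x" "mu x" 0] x mupos[OF x] by (simp add: S_def)
      then have "max 0 (- phi x) \<le> mu x" using mupos[OF x] x by (simp add: phi_def S_def)
      then show "ennreal (max 0 (- phi x)) \<le> ennreal (mu x)" by (rule ennreal_leI)
    qed
    also have "\<dots> \<le> (\<Sum>\<^sub>\<infinity>x. ennreal (mu x))" by (rule ennsum_subset) simp
    also have "\<dots> = ennreal 1"
      using K0[OF has_sum_imp_summable[OF muh]] infsumI[OF muh] mu_nonneg by (simp add: mu_def m_def)
    finally show ?thesis .
  qed
  have nuS: "(nu has_sum 1) S"
  proof -
    have "(nu has_sum 1) S \<longleftrightarrow> (nu has_sum 1) UNIV"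
      by (rule has_sum_cong_neutral) (use nu0 in \<open>auto simp: S_def intro: antisym\<close>)
    then show ?thesis using nu1 by simp
  qed
  show ?thesis unfolding RE
  proof (rule ereal_le_by_reals)
    fix M assume M: "ereal M < ext_sum phi S"
    obtain M0 where M0: "ereal M < ereal M0" "ereal M0 < ext_sum phi S" using ereal_dense2[OF M] by blast
    define eps where "eps = M0 - M"
    have eps: "0 < eps" using M0 by (simp add: eps_def)
    from G2[OF Nb M0(2)] obtain F where F12: "finite F" "F \<subseteq> S"
      and F3: "\<forall>G. finite G \<and> F \<subseteq> G \<and> G \<subseteq> S \<longrightarrow> M0 < sum phi G"
      by blast
    note F = F12 F3
    define K where "K = - ln (eps / 2)"
    have eK: "exp (- K) = eps / 2" unfolding K_def minus_minus using eps by (intro exp_ln) simp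
    define del where "del = eps / (2 * (\<bar>K\<bar> + 1))"
    have del: "0 < del" unfolding del_def using eps by (intro divide_pos_pos) auto
    have tl: "(sum nu \<longlongrightarrow> 1) (finite_subsets_at_top S)"
      using nuS unfolding has_sum_def .
    have "eventually (\<lambda>X. dist (sum nu X) 1 < del) (finite_subsets_at_top S)"
      by (rule tendstoD[OF tl del])
    then have "\<exists>X. finite X \<and> X \<subseteq> S \<and> (\<forall>Y. finite Y \<and> X \<subseteq> Y \<and> Y \<subseteq> S \<longrightarrow> dist (sum nu Y) 1 < del)"
      unfolding eventually_finite_subsets_at_top .
    then obtain X where X12: "finite X" "X \<subseteq> S"
      and X3: "\<forall>Y. finite Y \<and> X \<subseteq> Y \<and> Y \<subseteq> S \<longrightarrow> dist (sum nu Y) 1 < del"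
      by blast
    note X = X12 X3
    define G where "G = X \<union> F"
    have G: "finite G" "G \<subseteq> S" using X F by (auto simp: G_def)
    have Gphi: "M0 < sum phi G" using F(3) G by (auto simp: G_def)
    have Gnu: "\<bar>sum nu G - 1\<bar> < del" using X(3) G by (auto simp: G_def dist_real_def)
    define g where "g x = (if x \<in> G then ln (nu x / mu x) else - K)" for x
    have gb: "bounded (range g)"
      by (rule bounded_range_finite, rule finite_subset[of _ "insert (- K) ((\<lambda>x. ln (nu x / mu x)) ` G)"])
         (use G in \<open>auto simp: g_def\<close>)
    have sgnu: "(\<Sum>\<^sub>\<infinity>x. g x * nu x) = sum phi G + K * sum nu G - K"
    proof -
      have eq: "g x * nu x = (if x \<in> G then phi x + K * nu x else 0) + (- K) * nu x" for x
        by (simp add: g_def phi_def algebra_simps)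
      have a1: "(\<lambda>x. if x \<in> G then phi x + K * nu x else 0) summable_on UNIV"
        by (rule finite_nonzero_values_imp_summable_on, rule finite_subset[OF _ G(1)]) auto
      have a2: "(\<lambda>x. (- K) * nu x) summable_on UNIV" using nus summable_on_cmult_right by blast
      have i1: "(\<Sum>\<^sub>\<infinity>x. if x \<in> G then phi x + K * nu x else 0) = sum phi G + K * sum nu G"
      proof -
        have "(\<Sum>\<^sub>\<infinity>x. if x \<in> G then phi x + K * nu x else 0) = (\<Sum>\<^sub>\<infinity>x\<in>G. phi x + K * nu x)"
          by (rule infsum_cong_neutral) auto
        also have "\<dots> = sum phi G + K * sum nu G" using G(1) by (simp add: sum.distrib sum_distrib_left)
        finally show ?thesis .
      qed
      have i2: "(\<Sum>\<^sub>\<infinity>x. (- K) * nu x) = - K"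
        using infsum_cmult_right[OF nus, of "- K"] infsumI[OF nu1] by simp
      show ?thesis unfolding eq infsum_add[OF a1 a2] i1 i2 by simp
    qed
    have Ub: "U Q g a \<le> exp (- K)" for a
    proof -
      have z: "0 < Z Q g a" by (rule Z_props(2)[OF gb])
      have h1: "((\<lambda>c. nu (a, c) * inverse (m a)) has_sum marg1 nu a * inverse (m a)) UNIV"
        by (rule has_sum_cmult_left[OF slice_has])
      have h2: "((\<lambda>c. exp (- K) * pmf (Q a) c) has_sum exp (- K) * 1) UNIV"
        by (rule has_sum_cmult_right[OF pmf_has_sum1])
      have h3: "((\<lambda>c. nu (a, c) * inverse (m a) + exp (- K) * pmf (Q a) c) has_sum
                  (marg1 nu a * inverse (m a) + exp (- K) * 1)) UNIV"
        by (rule has_sum_add[OF h1 h2])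
      have "Z Q g a \<le> (\<Sum>\<^sub>\<infinity>c. nu (a, c) * inverse (m a) + exp (- K) * pmf (Q a) c)"
        unfolding Z_def
      proof (rule infsum_mono[OF Z_props(1)[OF gb] has_sum_imp_summable[OF h3]])
        fix c
        show "exp (g (a, c)) * pmf (Q a) c \<le> nu (a, c) * inverse (m a) + exp (- K) * pmf (Q a) c"
        proof (cases "(a, c) \<in> G")
          case True
          then have pos: "0 < nu (a, c)" "0 < mu (a, c)" using G(2) mupos by (auto simp: S_def)
          then have "pmf (Q a) c \<noteq> 0" "m a \<noteq> 0" by (auto simp: mu_def prod_kernel_def)
          then have "exp (g (a, c)) * pmf (Q a) c = nu (a, c) * inverse (m a)"
            using True pos by (simp add: g_def mu_def prod_kernel_def field_simps)
          then show ?thesis by simp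
        next
          case False
          have "0 \<le> nu (a, c) * inverse (m a)" using nu0 marg1_nonneg by (simp add: m_def)
          then show ?thesis using False by (simp add: g_def)
        qed
      qed
      also have "\<dots> = marg1 nu a * inverse (m a) + exp (- K)" using infsumI[OF h3] by simp
      also have "\<dots> \<le> 1 + exp (- K)" by (simp add: m_def field_simps)
      finally have "Z Q g a \<le> 1 + exp (- K)" .
      then have "ln (Z Q g a) \<le> ln (1 + exp (- K))" using z by simp
      also have "\<dots> \<le> exp (- K)" by (rule ln_add_one_self_le_self) simp
      finally show ?thesis by (simp add: U_Z)
    qed
    have sU: "(\<Sum>x\<in>UNIV. U Q g (snd x) * w x) \<le> exp (- K)"
    proof -
      have "(\<Sum>x\<in>UNIV. U Q g (snd x) * w x) = (\<Sum>b\<in>UNIV. U Q g b * m b)"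
        by (simp add: U_w mm m_def)
      also have "\<dots> \<le> (\<Sum>b\<in>UNIV. exp (- K) * m b)"
        by (rule sum_mono, rule mult_right_mono) (use Ub marg1_nonneg in \<open>auto simp: m_def\<close>)
      also have "\<dots> = exp (- K)" using sum_marg1 by (simp add: sum_distrib_left[symmetric] m_def)
      finally show ?thesis .
    qed
    have Kd: "\<bar>K * (sum nu G - 1)\<bar> \<le> eps / 2"
    proof -
      have "\<bar>K * (sum nu G - 1)\<bar> = \<bar>K\<bar> * \<bar>sum nu G - 1\<bar>" by (simp add: abs_mult)
      also have "\<dots> \<le> (\<bar>K\<bar> + 1) * del" using Gnu by (intro mult_mono) auto
      also have "\<dots> = eps / 2" by (simp add: del_def field_simps add_pos_nonneg)
      finally show ?thesis .
    qed
    have "Fg Q g (w, nu) = sum phi G + K * (sum nu G - 1) - (\<Sum>x\<in>UNIV. U Q g (snd x) * w x)"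
      unfolding Fg_def using sgnu by (simp add: algebra_simps)
    then have "M < Fg Q g (w, nu)" using Gphi Kd sU eK by (simp add: eps_def abs_le_iff)
    then have "ereal M \<le> ereal (Fg Q g (w, nu))" by simp
    also have "\<dots> \<le> Jhat Q (w, nu)"
      unfolding Jhat_Fg by (rule SUP_upper) (use gb in simp)
    finally show "ereal M \<le> Jhat Q (w, nu)" .
  qed
qed

lemma L2:
  shows "Jtilde Q (w, nu) \<le> Jhat Q (w, nu)"
proof (cases "marg2 w = marg1 nu")
  case False
  then show ?thesis using Jhat_mismatch by simp
next
  case True
  show ?thesis
  proof (cases "\<exists>x. nu x > 0 \<and> prod_kernel (marg1 nu) Q x = 0")
    case True
    then show ?thesis using Jhat_nac by simp
  next
    case False
    then show ?thesis using L2_ac[OF \<open>marg2 w = marg1 nu\<close>] True by (simp add: Jtilde_def)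
  qed
qed

lemma L1':
  shows "Jhat Q (w, nu) \<le> Jtilde Q (w, nu)"
proof (cases "marg2 w = marg1 nu")
  case False
  then show ?thesis by (simp add: Jtilde_def)
next
  case True
  show ?thesis unfolding Jhat_Fg
    by (rule SUP_least) (use L1 True in \<open>auto simp: Jtilde_def\<close>)
qed

end


lemma Ms_nuloc: "p \<in> Ms \<Longrightarrow> nuloc (snd p)"
  by (cases p) (auto simp: Ms_def nuloc_def)

lemma J_eq: "nuloc (snd p) \<Longrightarrow> Jtilde Q p = Jhat Q p"
  using nuloc.L2[of "snd p" Q "fst p"] nuloc.L1'[of "snd p" Q "fst p"] by (cases p) auto

lemma Fg_le_Jhat: "bounded (range g) \<Longrightarrow> ereal (Fg Q g p) \<le> Jhat Q p"
  unfolding Jhat_Fg by (rule SUP_upper) simp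

lemma comb_nuloc:
  fixes p q :: "('a::finite \<times> 'a \<Rightarrow> real) \<times> ('a \<times> 'a list \<Rightarrow> real)"
  assumes "nuloc (snd p)" "nuloc (snd q)" "t \<in> {0<..<1::real}"
  shows "nuloc (snd (convex_comb t p q))"
proof -
  have h: "((\<lambda>x. t * snd p x + (1 - t) * snd q x) has_sum (t * 1 + (1 - t) * 1)) UNIV"
    by (intro has_sum_add has_sum_cmult_right) (use assms in \<open>auto simp: nuloc_def\<close>)
  show ?thesis unfolding nuloc_def convex_comb_def
    using h assms by (auto simp: nuloc_def intro!: add_nonneg_nonneg mult_nonneg_nonneg)
qed

lemma Fg_comb:
  fixes p q :: "('a::finite \<times> 'a \<Rightarrow> real) \<times> ('a \<times> 'a list \<Rightarrow> real)"
  assumes g: "bounded (range g)" and p: "nuloc (snd p)" and q: "nuloc (snd q)"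
  shows "Fg Q g (convex_comb t p q) = t * Fg Q g p + (1 - t) * Fg Q g q"
proof -
  have sp: "(\<lambda>x. g x * snd p x) summable_on UNIV" by (rule nuloc.gnu_summable[OF p g])
  have sq: "(\<lambda>x. g x * snd q x) summable_on UNIV" by (rule nuloc.gnu_summable[OF q g])
  have "(\<Sum>\<^sub>\<infinity>x. g x * (t * snd p x + (1 - t) * snd q x))
        = (\<Sum>\<^sub>\<infinity>x. t * (g x * snd p x) + (1 - t) * (g x * snd q x))"
    by (rule infsum_cong) (simp add: algebra_simps)
  also have "\<dots> = t * (\<Sum>\<^sub>\<infinity>x. g x * snd p x) + (1 - t) * (\<Sum>\<^sub>\<infinity>x. g x * snd q x)"
    by (simp add: infsum_add summable_on_cmult_right sp sq infsum_cmult_right)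
  finally have e1: "(\<Sum>\<^sub>\<infinity>x. g x * (t * snd p x + (1 - t) * snd q x))
        = t * (\<Sum>\<^sub>\<infinity>x. g x * snd p x) + (1 - t) * (\<Sum>\<^sub>\<infinity>x. g x * snd q x)" .
  have e2: "(\<Sum>x\<in>UNIV. U Q g (snd x) * (t * fst p x + (1 - t) * fst q x))
        = t * (\<Sum>x\<in>UNIV. U Q g (snd x) * fst p x) + (1 - t) * (\<Sum>x\<in>UNIV. U Q g (snd x) * fst q x)"
    by (simp add: sum_distrib_left sum.distrib[symmetric] algebra_simps)
  show ?thesis unfolding Fg_def convex_comb_def fst_conv snd_conv e1 e2 by (simp add: algebra_simps)
qed

theorem lemma3p5:
  fixes Q :: "'a::finite \<Rightarrow> 'a list pmf"
  shows "(\<forall>p\<in>Ms. \<forall>q\<in>Ms. \<forall>t\<in>{0<..<1::real}.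
            Jtilde Q (convex_comb t p q) \<le> ereal t * Jtilde Q p + ereal (1 - t) * Jtilde Q q)
       \<and> (\<forall>ps p. (\<forall>k. ps k \<in> Ms) \<longrightarrow> p \<in> Ms \<longrightarrow> Ms_conv ps p \<longrightarrow>
            Jtilde Q p \<le> liminf (\<lambda>k. Jtilde Q (ps k)))
       \<and> (\<forall>p\<in>Ms. Jtilde Q p \<le> Jhat Q p)"
proof (intro conjI ballI allI impI)
  fix p q :: "('a \<times> 'a \<Rightarrow> real) \<times> ('a \<times> 'a list \<Rightarrow> real)" and t assume pM: "p \<in> Ms" and qM: "q \<in> Ms" and t: "t \<in> {0<..<1::real}"
  have p: "nuloc (snd p)" and q: "nuloc (snd q)" using pM qM by (auto intro: Ms_nuloc)
  have "Jtilde Q (convex_comb t p q) = Jhat Q (convex_comb t p q)"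
    by (rule J_eq[OF comb_nuloc[OF p q t]])
  also have "\<dots> \<le> ereal t * Jhat Q p + ereal (1 - t) * Jhat Q q"
    unfolding Jhat_Fg[of Q "convex_comb t p q"]
  proof (rule SUP_least)
    fix g :: "'a \<times> 'a list \<Rightarrow> real" assume "g \<in> {g. bounded (range g)}"
    then have g: "bounded (range g)" by simp
    have "ereal (Fg Q g (convex_comb t p q)) = ereal t * ereal (Fg Q g p) + ereal (1 - t) * ereal (Fg Q g q)"
      by (simp add: Fg_comb[OF g p q])
    also have "\<dots> \<le> ereal t * Jhat Q p + ereal (1 - t) * Jhat Q q"
      using t by (intro add_mono ereal_mult_left_mono Fg_le_Jhat[OF g]) auto
    finally show "ereal (Fg Q g (convex_comb t p q)) \<le> ereal t * Jhat Q p + ereal (1 - t) * Jhat Q q" .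
  qed
  also have "\<dots> = ereal t * Jtilde Q p + ereal (1 - t) * Jtilde Q q"
    using J_eq[OF p] J_eq[OF q] by simp
  finally show "Jtilde Q (convex_comb t p q) \<le> ereal t * Jtilde Q p + ereal (1 - t) * Jtilde Q q" .
next
  fix ps and p :: "('a \<times> 'a \<Rightarrow> real) \<times> ('a \<times> 'a list \<Rightarrow> real)" assume psM: "\<forall>k. ps k \<in> Ms" and pM: "p \<in> Ms" and conv: "Ms_conv ps p"
  have p: "nuloc (snd p)" using pM by (rule Ms_nuloc)
  have ps: "nuloc (snd (ps k))" for k using psM by (auto intro: Ms_nuloc)
  have "Jtilde Q p = Jhat Q p" by (rule J_eq[OF p])
  also have "\<dots> \<le> liminf (\<lambda>k. Jtilde Q (ps k))"
    unfolding Jhat_Fg[of Q p]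
  proof (rule SUP_least)
    fix g :: "'a \<times> 'a list \<Rightarrow> real" assume "g \<in> {g. bounded (range g)}"
    then have g: "bounded (range g)" by simp
    have t1: "(\<lambda>k. \<Sum>\<^sub>\<infinity>x. g x * snd (ps k) x) \<longlonglongrightarrow> (\<Sum>\<^sub>\<infinity>x. g x * snd p x)"
      using conv g unfolding Ms_conv_def weak_conv_nu_def by blast
    have t2: "(\<lambda>k. \<Sum>x\<in>UNIV. U Q g (snd x) * fst (ps k) x) \<longlonglongrightarrow> (\<Sum>x\<in>UNIV. U Q g (snd x) * fst p x)"
      using conv unfolding Ms_conv_def weak_conv_w_def by (elim conjE allE[of _ "\<lambda>x. U Q g (snd x)"])
    have "(\<lambda>k. Fg Q g (ps k)) \<longlonglongrightarrow> Fg Q g p"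
      unfolding Fg_def by (rule tendsto_diff[OF t1 t2])
    then have "(\<lambda>k. ereal (Fg Q g (ps k))) \<longlonglongrightarrow> ereal (Fg Q g p)" by (rule tendsto_ereal)
    then have "ereal (Fg Q g p) = liminf (\<lambda>k. ereal (Fg Q g (ps k)))"
      by (rule lim_imp_Liminf[symmetric, rotated]) simp
    also have "\<dots> \<le> liminf (\<lambda>k. Jtilde Q (ps k))"
      by (rule Liminf_mono) (use Fg_le_Jhat[OF g] J_eq[OF ps] in auto)
    finally show "ereal (Fg Q g p) \<le> liminf (\<lambda>k. Jtilde Q (ps k))" .
  qed
  finally show "Jtilde Q p \<le> liminf (\<lambda>k. Jtilde Q (ps k))" .
next
  fix p :: "('a \<times> 'a \<Rightarrow> real) \<times> ('a \<times> 'a list \<Rightarrow> real)" assume "p \<in> Ms"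
  then show "Jtilde Q p \<le> Jhat Q p" using J_eq[OF Ms_nuloc, of p Q] by simp
qed

end
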